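(* Let $d\ge2$, let $\mathbf A,\mathbf B\in\overline{\mathbb Q}[t]$ be nonzero coprime polynomials, $\mathbf c=\mathbf A/\mathbf B$, let $\lambda\in\overline{\mathbb Q}^*$ and let $|\cdot|_v$ be an absolute value on $\overline{\mathbb Q}$. Then for each $n\ge1$, $$M_{n+1,v}(\lambda)\ge\frac{\min\{|\lambda|_v,1\}}{2\max\{|\lambda|_v,1\}}\cdot M_{n,v}(\lambda)^d.$$
   Context: The polynomials $\mathbf A_{\mathbf c,n},\mathbf B_{\mathbf c,n}$ are defined by: $\mathbf A_{\mathbf c,0}=\mathbf A$, $\mathbf B_{\mathbf c,0}=\mathbf B$; if $\mathbf A(0)\neq0$ then $\mathbf A_{\mathbf c,1}=\mathbf A^d+t\mathbf B^d$, $\mathbf B_{\mathbf c,1}=\mathbf A\mathbf B^{d-1}$, while if $\mathbf A(0)=0$ then $\mathbf A_{\mathbf c,1}=(\mathbf A^d+t\mathbf B^d)/t$, $\mathbf B_{\mathbf c,1}=\mathbf A\mathbf B^{d-1}/t$; for $n\ge1$, $\mathbf A_{\mathbf c,n+1}=\mathbf A_{\mathbf c,n}^d+t\mathbf B_{\mathbf c,n}^d$, $\mathbf B_{\mathbf c,n+1}=\mathbf A_{\mathbf c,n}\mathbf B_{\mathbf c,n}^{d-1}$. Then $M_{n,v}(\lambda)=\max\{|\mathbf A_{\mathbf c,n}(\lambda)|_v,|\mathbf B_{\mathbf c,n}(\lambda)|_v\}$. *)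

theory Defs
  imports "HOL-Computational_Algebra.Computational_Algebra"
begin

definition Qbar :: "complex set" where
  "Qbar = {x. algebraic x}"

definition abs_value_on :: "complex set \<Rightarrow> (complex \<Rightarrow> real) \<Rightarrow> bool" where
  "abs_value_on K v \<longleftrightarrow>
     (\<forall>x\<in>K. 0 \<le> v x \<and> (v x = 0 \<longleftrightarrow> x = 0)) \<and>
     (\<forall>x\<in>K. \<forall>y\<in>K. v (x * y) = v x * v y \<and> v (x + y) \<le> v x + v y)"

fun AB_seq :: "nat \<Rightarrow> complex poly \<Rightarrow> complex poly \<Rightarrow> nat \<Rightarrow> complex poly \<times> complex poly" where
  "AB_seq d A B 0 = (A, B)"
| "AB_seq d A B (Suc 0) =
     (if poly A 0 \<noteq> 0 then (A ^ d + [:0, 1:] * B ^ d, A * B ^ (d - 1))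
      else ((A ^ d + [:0, 1:] * B ^ d) div [:0, 1:], (A * B ^ (d - 1)) div [:0, 1:]))"
| "AB_seq d A B (Suc (Suc n)) =
     (let (An, Bn) = AB_seq d A B (Suc n) in (An ^ d + [:0, 1:] * Bn ^ d, An * Bn ^ (d - 1)))"

definition M_nv :: "nat \<Rightarrow> complex poly \<Rightarrow> complex poly \<Rightarrow> nat \<Rightarrow> (complex \<Rightarrow> real) \<Rightarrow> complex \<Rightarrow> real" where
  "M_nv d A B n v lam = max (v (poly (fst (AB_seq d A B n)) lam)) (v (poly (snd (AB_seq d A B n)) lam))"

end

theory Submission
  imports Defs "HOL-Algebra.Algebraic_Closure_Type"
begin
hide_const (open) UnivPoly.up_ring.coeff
abbreviation CR :: "complex ring" where "CR \<equiv> ring_of_type_algebra"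

lemma CR_field: "field CR" by (rule field_from_type_algebra)

lemma CR_simps [simp]: "carrier CR = UNIV" "mult CR = (*)" "add CR = (+)"
  "one CR = 1" "zero CR = 0"
  by (auto simp: ring_of_type_algebra_def)

lemma CR_pow [simp]: "x [^]\<^bsub>CR\<^esub> (n::nat) = x ^ n"
  by (induct n) (simp_all add: nat_pow_def)

lemma CR_uminus [simp]: "a_inv CR x = - x"
proof -
  interpret field CR by (rule CR_field)
  have "inv\<^bsub>add_monoid CR\<^esub> x = - x" using add.inv_char[of x "-x"] by simp
  thus ?thesis by (simp add: a_inv_def)
qed

lemma CR_inv [simp]: "x \<noteq> 0 \<Longrightarrow> m_inv CR x = inverse x"
proof -
  interpret field CR by (rule CR_field)
  assume "x \<noteq> 0" thus ?thesis using inv_char[of x "inverse x"] by simp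
qed

lemma CR_eval: "ring.eval CR l x = poly (Poly (rev l)) x"
proof -
  interpret field CR by (rule CR_field)
  show ?thesis
  proof (induct l)
    case Nil thus ?case by simp
  next
    case (Cons a l)
    have "eval (a # l) x = a * x ^ length l + eval l x" by simp
    also have "\<dots> = poly (Poly (rev l @ [a])) x"
      by (simp add: Poly_append poly_monom Cons)
    finally show ?case by simp
  qed
qed

lemma Rats_subfield: "subfield \<rat> CR"
proof -
  interpret field CR by (rule CR_field)
  show ?thesis
    by (rule subfieldI'[OF subringI]) auto
qed

lemma alg_to_CR: "Polynomial.algebraic x \<Longrightarrow> (ring.algebraic CR over \<rat>) x"
proof -
  interpret field CR by (rule CR_field)
  assume "Polynomial.algebraic x"
  then obtain p where p: "\<forall>i. poly.coeff p i \<in> \<rat>" "p \<noteq> 0" "poly p x = 0"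
    by (auto simp: algebraic_altdef)
  let ?l = "rev (coeffs p)"
  show ?thesis
  proof (rule local.algebraicI[of ?l])
    have "set ?l \<subseteq> \<rat>" using p(1) by (auto simp: coeffs_def)
    moreover have "hd ?l \<noteq> 0" using p(2)
      by (simp add: hd_rev last_coeffs_eq_coeff_degree)
    ultimately show "?l \<in> carrier (univ_poly CR \<rat>)"
      by (simp add: univ_poly_def polynomial_def)
    show "?l \<noteq> []" using p(2) by simp
    show "eval ?l x = \<zero>\<^bsub>CR\<^esub>" using p(3) by (simp add: CR_eval)
  qed
qed

lemma CR_to_alg: "(ring.algebraic CR over \<rat>) x \<Longrightarrow> Polynomial.algebraic x"
proof -
  interpret field CR by (rule CR_field)
  assume a: "(algebraic over \<rat>) x"
  obtain l where l: "l \<in> carrier (univ_poly CR \<rat>)" "l \<noteq> []" "eval l x = 0"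
    using local.algebraicE[OF subfieldE(1)[OF Rats_subfield] _ a] by auto
  have pl: "set l \<subseteq> \<rat>" "hd l \<noteq> 0" using l(1,2)
    by (auto simp: univ_poly_def polynomial_def)
  let ?p = "Poly (rev l)"
  show ?thesis
  proof (rule Polynomial.algebraicI')
    show "poly.coeff ?p i \<in> \<rat>" for i
      using pl(1) by (auto simp: nth_default_def) (metis nth_mem set_rev length_rev subsetD)
    have "poly.coeff ?p (length l - 1) = hd l"
      using l(2) by (simp add: nth_default_def rev_nth hd_conv_nth)
    thus "?p \<noteq> 0" using pl(2) by (metis Polynomial.coeff_0)
    show "poly ?p x = 0" using l(3) by (simp add: CR_eval)
  qed
qed

lemma Qbar_sub: "Qbar = {x \<in> carrier CR. (ring.algebraic CR over \<rat>) x}"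
  unfolding Qbar_def using alg_to_CR CR_to_alg by auto

lemma Qbar_subfield: "subfield Qbar CR"
proof -
  interpret field CR by (rule CR_field)
  show ?thesis unfolding Qbar_sub by (rule subfield_of_algebraics[OF Rats_subfield])
qed

lemma Qbar_add: "a \<in> Qbar \<Longrightarrow> b \<in> Qbar \<Longrightarrow> a + b \<in> Qbar"
  and Qbar_mult: "a \<in> Qbar \<Longrightarrow> b \<in> Qbar \<Longrightarrow> a * b \<in> Qbar"
  and Qbar_uminus: "a \<in> Qbar \<Longrightarrow> - a \<in> Qbar"
proof -
  interpret field CR by (rule CR_field)
  have s: "subring Qbar CR" by (rule subfieldE(1)[OF Qbar_subfield])
  show "a \<in> Qbar \<Longrightarrow> b \<in> Qbar \<Longrightarrow> a + b \<in> Qbar" using subringE(7)[OF s] by auto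
  show "a \<in> Qbar \<Longrightarrow> b \<in> Qbar \<Longrightarrow> a * b \<in> Qbar" using subringE(6)[OF s] by auto
  show "a \<in> Qbar \<Longrightarrow> - a \<in> Qbar" using subringE(5)[OF s] by auto
qed

lemma Qbar_0: "0 \<in> Qbar" and Qbar_1: "1 \<in> Qbar" and Qbar_m1: "-1 \<in> Qbar"
  by (auto simp: Qbar_def intro: rat_imp_algebraic)

definition QP :: "complex poly \<Rightarrow> bool" where "QP p \<longleftrightarrow> (\<forall>i. coeff p i \<in> Qbar)"

lemma QP_add: "QP p \<Longrightarrow> QP q \<Longrightarrow> QP (p + q)"
  by (simp add: QP_def Qbar_add)

lemma QP_pCons: "QP (pCons a p) \<longleftrightarrow> a \<in> Qbar \<and> QP p"
  unfolding QP_def by (auto simp: coeff_pCons split: nat.splits)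

lemma QP_smult: "a \<in> Qbar \<Longrightarrow> QP q \<Longrightarrow> QP (Polynomial.smult a q)"
  by (simp add: QP_def Qbar_mult)

lemma QP_mult: "QP p \<Longrightarrow> QP q \<Longrightarrow> QP (p * q)"
proof (induct p rule: pCons_induct)
  case 0 thus ?case by (simp add: QP_def Qbar_0)
next
  case (pCons a p)
  thus ?case by (simp add: QP_pCons QP_add QP_smult Qbar_0)
qed

lemma QP_1: "QP 1" by (simp add: QP_def coeff_1 Qbar_0 Qbar_1)

lemma QP_pow: "QP p \<Longrightarrow> QP (p ^ n)"
  by (induct n) (simp_all add: QP_1 QP_mult)

lemma QP_x: "QP [:0, 1:]" unfolding QP_def
  by (auto simp: coeff_pCons Qbar_0 Qbar_1 split: nat.splits)

lemma QP_pCons0: "QP p \<Longrightarrow> QP (pCons 0 p)" by (simp add: QP_pCons Qbar_0)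

lemma QP_div_x: "QP p \<Longrightarrow> QP (p div [:0, 1:])"
proof -
  assume "QP p"
  obtain a q where p: "p = pCons a q" by (cases p) auto
  have "p = [:a:] + [:0, 1:] * q" unfolding p by simp
  hence "p div [:0,1:] = q + [:a:] div [:0,1:]"
    by (metis add.commute div_mult_self1 mult.commute pCons_eq_0_iff zero_neq_one)
  also have "[:a:] div [:0,1:] = 0" by (rule div_poly_less) simp
  finally show ?thesis using \<open>QP p\<close> p by (simp add: QP_pCons)
qed

lemma poly_Qbar: "QP p \<Longrightarrow> x \<in> Qbar \<Longrightarrow> poly p x \<in> Qbar"
  by (induct p rule: pCons_induct) (auto simp: QP_pCons Qbar_0 Qbar_add Qbar_mult)

lemma QP_AB: "QP A \<Longrightarrow> QP B \<Longrightarrow> QP (fst (AB_seq d A B k)) \<and> QP (snd (AB_seq d A B k))"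
proof (induction d A B k rule: AB_seq.induct)
  case (1 d A B) thus ?case by simp
next
  case (2 d A B) thus ?case
    by (simp add: QP_add QP_mult QP_pow QP_x QP_div_x QP_pCons0)
next
  case (3 d A B n) thus ?case
    by (auto simp: QP_add QP_mult QP_pow QP_x QP_pCons0 split: prod.splits)
qed

lemma v_mult: "abs_value_on Qbar v \<Longrightarrow> x \<in> Qbar \<Longrightarrow> y \<in> Qbar \<Longrightarrow> v (x * y) = v x * v y"
  unfolding abs_value_on_def by blast

lemma v_1: "abs_value_on Qbar v \<Longrightarrow> v 1 = 1"
proof -
  assume a: "abs_value_on Qbar v"
  have e: "v 1 = v 1 * v 1" using v_mult[OF a Qbar_1 Qbar_1] by simp
  have n: "v 1 \<noteq> 0" using a Qbar_1 unfolding abs_value_on_def by auto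
  have "v 1 * (v 1 - 1) = 0" using e by (simp add: algebra_simps)
  thus ?thesis using n by simp
qed

lemma v_uminus: "abs_value_on Qbar v \<Longrightarrow> y \<in> Qbar \<Longrightarrow> v (- y) = v y"
proof -
  assume a: "abs_value_on Qbar v" and y: "y \<in> Qbar"
  have e: "v (-1) * v (-1) = 1" using v_mult[OF a Qbar_m1 Qbar_m1] v_1[OF a] by simp
  have p: "v (-1) \<ge> 0" using a Qbar_m1 unfolding abs_value_on_def by blast
  have "(v (-1) - 1) * (v (-1) + 1) = 0" using e by (simp add: algebra_simps)
  hence m1: "v (-1) = 1" using p by auto
  have "v (-y) = v ((-1) * y)" by simp
  also have "\<dots> = v (-1) * v y" by (rule v_mult[OF a Qbar_m1 y])
  finally show ?thesis using m1 by simp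
qed

lemma v_rev: "abs_value_on Qbar v \<Longrightarrow> x \<in> Qbar \<Longrightarrow> y \<in> Qbar \<Longrightarrow> v (x + y) \<ge> v x - v y"
proof -
  assume a: "abs_value_on Qbar v" and x: "x \<in> Qbar" and y: "y \<in> Qbar"
  have "v x = v ((x + y) + (- y))" by simp
  also have "\<dots> \<le> v (x + y) + v (- y)"
    using a Qbar_add[OF x y] Qbar_uminus[OF y] unfolding abs_value_on_def by blast
  finally show ?thesis using v_uminus[OF a y] by simp
qed

lemma Qbar_pow: "x \<in> Qbar \<Longrightarrow> x ^ n \<in> Qbar"
  by (induct n) (simp_all add: Qbar_1 Qbar_mult)

lemma v_pow: "abs_value_on Qbar v \<Longrightarrow> x \<in> Qbar \<Longrightarrow> v (x ^ n) = v x ^ n"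
  by (induct n) (simp_all add: v_1 v_mult Qbar_pow)

lemma key:
  fixes a b l W :: real and d :: nat
  assumes a: "a \<ge> 0" and b: "b \<ge> 0" and l: "l > 0" and d: "d \<ge> 1"
    and X1: "W \<ge> a ^ d - l * b ^ d" and X2: "W \<ge> l * b ^ d - a ^ d"
  shows "max W (a * b ^ (d - 1)) \<ge> min l 1 / (2 * max l 1) * (max a b) ^ d"
proof -
  define c where "c = min l 1 / (2 * max l 1)"
  have c0: "c \<ge> 0" using l by (simp add: c_def)
  have cc: "(l \<le> 1 \<and> c = l / 2) \<or> (l > 1 \<and> c = 1 / (2 * l))"
    using l by (auto simp: c_def min_def max_def)
  have c1: "c \<le> 1/2" and c2: "c * l \<le> 1/2" and c3: "c \<le> l / 2"
  proof -
    show "c \<le> 1/2" "c * l \<le> 1/2" "c \<le> l / 2"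
    proof (atomize(full), cases "l \<le> 1")
      case True
      hence "c = l / 2" using cc by auto
      moreover have "l * l \<le> 1" using True l by (simp add: mult_le_one)
      moreover have "c * l = (l * l) / 2" using \<open>c = l / 2\<close> by simp
      ultimately show "c \<le> 1/2 \<and> c * l \<le> 1/2 \<and> c \<le> l / 2" using True l by linarith
    next
      case False
      hence "c = 1 / (2 * l)" using cc by auto
      moreover have "1 / (2 * l) \<le> 1/2" using False by (simp add: field_simps)
      moreover have "1 / (2 * l) * l = 1/2" using l by simp
      moreover have "1/2 < l/2" using False by simp
      ultimately have "c \<le> 1/2" "c * l = 1/2" "1/2 < l/2" by simp_all
      thus "c \<le> 1/2 \<and> c * l \<le> 1/2 \<and> c \<le> l / 2" by linarith
    qed
  qed
  have pd: "\<And>x::real. x ^ d = x * x ^ (d - 1)" using d by (metis Suc_diff_le diff_Suc_1 power_Suc)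
  have main: "c * (max a b) ^ d \<le> max W (a * b ^ (d - 1))"
  proof (cases "a \<ge> b")
    case True
    hence m: "max a b = a" by simp
    have bd: "b ^ d \<le> a * b ^ (d - 1)" using pd[of b] True b by (simp add: mult_right_mono)
    show ?thesis
    proof (cases "l * b ^ d \<le> a ^ d / 2")
      case True
      have "c * a ^ d \<le> (1/2) * a ^ d" using c1 a by (intro mult_right_mono) simp_all
      hence "c * a ^ d \<le> W" using True X1 by linarith
      thus ?thesis using m by simp
    next
      case False
      have "c * a ^ d = (c * l) * (a ^ d / l)" using l by simp
      also have "\<dots> \<le> (1/2) * (a ^ d / l)" using c2 a l by (intro mult_right_mono) simp_all
      also have "\<dots> \<le> b ^ d" using False l by (simp add: field_simps)
      finally have "c * a ^ d \<le> a * b ^ (d - 1)" using bd by linarith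
      thus ?thesis using m by simp
    qed
  next
    case False
    hence m: "max a b = b" by simp
    have ad: "a ^ d \<le> a * b ^ (d - 1)" using pd[of a] False a
      by (simp add: mult_left_mono power_mono)
    have cb: "c * b ^ d \<le> (l / 2) * b ^ d" using c3 b by (intro mult_right_mono) simp_all
    have "l / 2 * b ^ d = l * b ^ d / 2" by simp
    hence "c * b ^ d \<le> W \<or> c * b ^ d \<le> a * b ^ (d - 1)" using cb X2 ad by linarith
    thus ?thesis using m by auto
  qed
  thus ?thesis by (simp only: c_def)
qed


theorem lemma5p5:
  fixes d n :: nat and A B :: "complex poly" and lam :: complex and v :: "complex \<Rightarrow> real"
  assumes "d \<ge> 2"
    and "\<forall>i. coeff A i \<in> Qbar" and "\<forall>i. coeff B i \<in> Qbar"
    and "A \<noteq> 0" and "B \<noteq> 0" and "coprime A B"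
    and "lam \<in> Qbar" and "lam \<noteq> 0"
    and "abs_value_on Qbar v"
    and "n \<ge> 1"
  shows "M_nv d A B (n + 1) v lam
           \<ge> min (v lam) 1 / (2 * max (v lam) 1) * (M_nv d A B n v lam) ^ d"
proof -
  note av = assms(9)
  obtain m where n: "n = Suc m" using assms(10) by (cases n) auto
  obtain An Bn where AB: "AB_seq d A B n = (An, Bn)" by fastforce
  have QA: "QP An" "QP Bn" using QP_AB[of A B d n] assms(2,3) AB by (auto simp: QP_def)
  define \<alpha> where "\<alpha> = poly An lam"
  define \<beta> where "\<beta> = poly Bn lam"
  have Qa: "\<alpha> \<in> Qbar" and Qb: "\<beta> \<in> Qbar" using QA assms(7) poly_Qbar by (auto simp: \<alpha>_def \<beta>_def)
  have Sn: "AB_seq d A B (Suc n) = (An ^ d + [:0, 1:] * Bn ^ d, An * Bn ^ (d - 1))"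
    using AB n by simp
  have Mn: "M_nv d A B n v lam = max (v \<alpha>) (v \<beta>)" by (simp add: M_nv_def AB \<alpha>_def \<beta>_def)
  have Mn1: "M_nv d A B (n + 1) v lam = max (v (\<alpha> ^ d + lam * \<beta> ^ d)) (v \<alpha> * v \<beta> ^ (d - 1))"
    by (simp add: M_nv_def Sn \<alpha>_def[symmetric] \<beta>_def[symmetric] v_mult[OF av] v_pow[OF av]
        Qa Qb Qbar_pow)
  have Q1: "\<alpha> ^ d \<in> Qbar" and Q2: "lam * \<beta> ^ d \<in> Qbar"
    using Qa Qb assms(7) by (simp_all add: Qbar_pow Qbar_mult)
  have e1: "v (lam * \<beta> ^ d) = v lam * v \<beta> ^ d"
    using Qb assms(7) by (simp add: v_mult[OF av] v_pow[OF av] Qbar_pow)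
  have e2: "v (\<alpha> ^ d) = v \<alpha> ^ d" using Qa by (simp add: v_pow[OF av])
  have X1: "v (\<alpha> ^ d + lam * \<beta> ^ d) \<ge> v \<alpha> ^ d - v lam * v \<beta> ^ d"
    using v_rev[OF av Q1 Q2] e1 e2 by simp
  have X2: "v (\<alpha> ^ d + lam * \<beta> ^ d) \<ge> v lam * v \<beta> ^ d - v \<alpha> ^ d"
    using v_rev[OF av Q2 Q1] e1 e2 by (simp add: add.commute)
  have pos: "v \<alpha> \<ge> 0" "v \<beta> \<ge> 0" "v lam > 0"
    using av Qa Qb assms(7,8) unfolding abs_value_on_def by (auto simp: less_le)
  show ?thesis unfolding Mn Mn1
    by (rule key[OF pos _ X1 X2]) (use assms(1) in simp)
qed

end
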